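(* In $\mathbb{R}^8$ with coordinates $(l_{ijk})_{i,j,k\in\{0,1\}}$, let $X=\{l: l_{000}+l_{011}-l_{001}-l_{010}\ge0,\ l_{100}+l_{111}-l_{101}-l_{110}\ge0,\ l_{000}+l_{101}-l_{001}-l_{100}\ge0,\ l_{010}+l_{111}-l_{011}-l_{110}\ge0,\ l_{000}+l_{110}-l_{010}-l_{100}\ge0,\ l_{001}+l_{111}-l_{011}-l_{101}\ge0\}$, $Y=\{l: l_{000}+l_{011}-l_{001}-l_{010}\ge0,\ l_{100}+l_{111}-l_{101}-l_{110}\ge0,\ l_{000}+l_{101}-l_{001}-l_{100}\le0,\ l_{010}+l_{111}-l_{011}-l_{110}\le0,\ l_{000}+l_{110}-l_{010}-l_{100}\le0,\ l_{001}+l_{111}-l_{011}-l_{101}\le0\}$, $W=\{l: l_{000}+l_{011}-l_{001}-l_{010}\ge0,\ l_{100}+l_{111}-l_{101}-l_{110}\ge0\}$. Then the Minkowski sum $X+Y=\{x+y:x\in X,y\in Y\}$ equals $W$. *)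

theory Defs
  imports "HOL-Analysis.Analysis"
begin

text \<open>A point of R^8 with coordinates l_ijk, i,j,k in {0,1}, is modelled as a function
  l :: bool => bool => bool => real, where False encodes 0 and True encodes 1,
  so l_ijk = l i j k.\<close>

definition setX :: "(bool \<Rightarrow> bool \<Rightarrow> bool \<Rightarrow> real) set" where
  "setX = {l. l False False False + l False True True - l False False True - l False True False \<ge> 0
            \<and> l True False False + l True True True - l True False True - l True True False \<ge> 0
            \<and> l False False False + l True False True - l False False True - l True False False \<ge> 0
            \<and> l False True False + l True True True - l False True True - l True True False \<ge> 0
            \<and> l False False False + l True True False - l False True False - l True False False \<ge> 0
            \<and> l False False True + l True True True - l False True True - l True False True \<ge> 0}"

definition setY :: "(bool \<Rightarrow> bool \<Rightarrow> bool \<Rightarrow> real) set" where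
  "setY = {l. l False False False + l False True True - l False False True - l False True False \<ge> 0
            \<and> l True False False + l True True True - l True False True - l True True False \<ge> 0
            \<and> l False False False + l True False True - l False False True - l True False False \<le> 0
            \<and> l False True False + l True True True - l False True True - l True True False \<le> 0
            \<and> l False False False + l True True False - l False True False - l True False False \<le> 0
            \<and> l False False True + l True True True - l False True True - l True False True \<le> 0}"

definition setW :: "(bool \<Rightarrow> bool \<Rightarrow> bool \<Rightarrow> real) set" where
  "setW = {l. l False False False + l False True True - l False False True - l False True False \<ge> 0
            \<and> l True False False + l True True True - l True False True - l True True False \<ge> 0}"

end

theory Submission
  imports Defs
begin

theorem mainTheorem2:
  shows "{(\<lambda>i j k. x i j k + y i j k) | x y. x \<in> setX \<and> y \<in> setY} = setW"
proof
  show "{(\<lambda>i j k. x i j k + y i j k) | x y. x \<in> setX \<and> y \<in> setY} \<subseteq> setW"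
    by (auto simp: setX_def setY_def setW_def)
next
  show "setW \<subseteq> {(\<lambda>i j k. x i j k + y i j k) | x y. x \<in> setX \<and> y \<in> setY}"
  proof
    fix w assume w: "w \<in> setW"
    define K where "K = max 0 (max (w False False False + w True False True - w False False True - w True False False)
      (max (w False True False + w True True True - w False True True - w True True False)
      (max (w False False False + w True True False - w False True False - w True False False)
       (w False False True + w True True True - w False True True - w True False True))))"
    define x where "x = (\<lambda>i j k. if \<not> i \<and> \<not> j \<and> \<not> k then K else if \<not> i \<and> j \<and> k then - K else (0::real))"
    define y where "y = (\<lambda>i j k. w i j k - x i j k)"
    have "x \<in> setX" unfolding setX_def x_def K_def by auto
    moreover have "y \<in> setY" using w unfolding setY_def setW_def y_def x_def K_def by auto
    moreover have "w = (\<lambda>i j k. x i j k + y i j k)" unfolding y_def by simp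
    ultimately show "w \<in> {(\<lambda>i j k. x i j k + y i j k) | x y. x \<in> setX \<and> y \<in> setY}" by blast
  qed
qed

end
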